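(* Let $I\subseteq\mathbb{R}$ be an interval equipped with Lebesgue measure, and let $\Theta\subseteq\mathbb{R}$ be an interval. Let $\{p_\theta\}_{\theta\in\Theta}$ be a family of strictly positive probability densities on $I$ with respect to Lebesgue measure, continuous in $\theta$ (for each $x\in I$, $\theta\mapsto p_\theta(x)$ is continuous), and with strictly monotone likelihood ratio (for $\theta'<\theta''$ in $\Theta$, $x\mapsto p_{\theta''}(x)/p_{\theta'}(x)$ is strictly increasing). Let $F(\theta,x)=\int_{I\cap]-\infty,x]}p_\theta(y)\,dy$ denote the distribution function of $\mathbb{P}_\theta=p_\theta\cdot\lambda$. For each $\theta\in\Theta\setminus\{\sup\Theta\}$ consider the one-sided hypotheses $\Theta_1^\theta=\,]-\infty,\theta]\cap\Theta$ and $\Theta_0^\theta=\,]\theta,+\infty[\cap\Theta$, and the neutral vote $Q^x(\Theta_1^\theta)=1-F(\theta,x)$. Then these votes are compatible, i.e. for Lebesgue-almost every $x\in I$ there exists a unique probability measure $Q^x$ on the $\sigma$-algebra of subsets of $\Theta$ generated by $\{\Theta_1^\theta:\theta\in\Theta\setminus\{\sup\Theta\}\}$ such that $Q^x(\Theta_1^\theta)=1-F(\theta,x)$ for all $\theta\in\Theta\setminus\{\sup\Theta\}$, if and only if for almost every $x\in I$: (1) $\lim_{\theta\to\sup\Theta}F(\theta,x)=0$ whenever $\sup\Theta\notin\Theta$; and (2) $\lim_{\theta\to\inf\Theta}F(\theta,x)=1$ whenever $\inf\Theta\notin\Theta$.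
   Context: The quantity $1-F(\theta,x)$ is the "neutral vote" (the vote of experts at the boundary point $\theta$) in favour of the hypothesis $]-\infty,\theta]\cap\Theta$ when $x$ is observed. A family of such votes, indexed by a family of one-sided hypotheses, is called compatible when, for almost every observation $x$, the map assigning to each hypothesis its vote extends to a unique probability measure on the $\sigma$-algebra generated by these hypotheses. *)

theory Defs
  imports "HOL-Probability.Probability"
begin

definition distF :: "real set \<Rightarrow> (real \<Rightarrow> real \<Rightarrow> real) \<Rightarrow> real \<Rightarrow> real \<Rightarrow> real" where
  "distF I p \<theta> x = (LINT y:(I \<inter> {..x})|lebesgue. p \<theta> y)"

text \<open>Theta minus its supremum: the points of Theta that are not the maximum.\<close>
definition nonmax :: "real set \<Rightarrow> real set" where
  "nonmax \<Theta> = {\<theta> \<in> \<Theta>. \<exists>\<theta>'\<in>\<Theta>. \<theta> < \<theta>'}"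

definition hyp1 :: "real set \<Rightarrow> real \<Rightarrow> real set" where
  "hyp1 \<Theta> \<theta> = {..\<theta>} \<inter> \<Theta>"

definition has_max :: "real set \<Rightarrow> bool" where
  "has_max \<Theta> \<longleftrightarrow> (\<exists>m\<in>\<Theta>. \<forall>t\<in>\<Theta>. t \<le> m)"

definition has_min :: "real set \<Rightarrow> bool" where
  "has_min \<Theta> \<longleftrightarrow> (\<exists>m\<in>\<Theta>. \<forall>t\<in>\<Theta>. m \<le> t)"

definition to_sup :: "real set \<Rightarrow> real filter" where
  "to_sup \<Theta> = (if bdd_above \<Theta> then at (Sup \<Theta>) within \<Theta> else inf at_top (principal \<Theta>))"

definition to_inf :: "real set \<Rightarrow> real filter" where
  "to_inf \<Theta> = (if bdd_below \<Theta> then at (Inf \<Theta>) within \<Theta> else inf at_bot (principal \<Theta>))"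

definition votes_compatible :: "real set \<Rightarrow> real set \<Rightarrow> (real \<Rightarrow> real \<Rightarrow> real) \<Rightarrow> bool" where
  "votes_compatible I \<Theta> F \<longleftrightarrow>
     (AE x in lebesgue. x \<in> I \<longrightarrow>
        (\<exists>!Q :: real measure. prob_space Q \<and> space Q = \<Theta> \<and>
            sets Q = sigma_sets \<Theta> (hyp1 \<Theta> ` nonmax \<Theta>) \<and>
            (\<forall>\<theta>\<in>nonmax \<Theta>. measure Q (hyp1 \<Theta> \<theta>) = 1 - F \<theta> x)))"

end

theory Submission
  imports Defs
begin


lemma hyp1_sub: "hyp1 \<Theta> t \<subseteq> \<Theta>" by (auto simp: hyp1_def)
lemma hyp1_Int: "hyp1 \<Theta> s \<inter> hyp1 \<Theta> t = hyp1 \<Theta> (min s t)" by (auto simp: hyp1_def)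
lemma hyp1_mono: "s \<le> t \<Longrightarrow> hyp1 \<Theta> s \<subseteq> hyp1 \<Theta> t" by (auto simp: hyp1_def)
lemma nonmax_min: "s \<in> nonmax \<Theta> \<Longrightarrow> t \<in> nonmax \<Theta> \<Longrightarrow> min s t \<in> nonmax \<Theta>"
  by (auto simp: min_def)
lemma nonmax_eq: "\<not> has_max \<Theta> \<Longrightarrow> nonmax \<Theta> = \<Theta>"
  by (auto simp: nonmax_def has_max_def not_le)

lemma uniq:
  assumes P1: "prob_space Q1" and P2: "prob_space Q2" and s1: "space Q1 = \<Theta>" and s2: "space Q2 = \<Theta>"
    and S1: "sets Q1 = sigma_sets \<Theta> (hyp1 \<Theta> ` nonmax \<Theta>)"
    and S2: "sets Q2 = sigma_sets \<Theta> (hyp1 \<Theta> ` nonmax \<Theta>)"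
    and eq: "\<forall>\<theta>\<in>nonmax \<Theta>. measure Q1 (hyp1 \<Theta> \<theta>) = measure Q2 (hyp1 \<Theta> \<theta>)"
  shows "Q1 = Q2"
proof -
  interpret A: prob_space Q1 by fact
  interpret B: prob_space Q2 by fact
  have sig: "sigma_sets \<Theta> (insert \<Theta> (hyp1 \<Theta> ` nonmax \<Theta>)) = sigma_sets \<Theta> (hyp1 \<Theta> ` nonmax \<Theta>)"
    by (rule sigma_sets_eqI) (auto intro: sigma_sets_top sigma_sets.Basic)
  show ?thesis
  proof (rule measure_eqI_generator_eq[where E="insert \<Theta> (hyp1 \<Theta> ` nonmax \<Theta>)" and \<Omega>=\<Theta> and A="\<lambda>_. \<Theta>"])
    show "Int_stable (insert \<Theta> (hyp1 \<Theta> ` nonmax \<Theta>))"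
      unfolding Int_stable_def using hyp1_sub
      by (auto simp: hyp1_Int Int_absorb1 Int_absorb2 intro!: imageI nonmax_min)
    show "insert \<Theta> (hyp1 \<Theta> ` nonmax \<Theta>) \<subseteq> Pow \<Theta>" using hyp1_sub by auto
    fix X assume "X \<in> insert \<Theta> (hyp1 \<Theta> ` nonmax \<Theta>)"
    then show "emeasure Q1 X = emeasure Q2 X"
    proof
      assume "X = \<Theta>"
      then show ?thesis using A.emeasure_space_1 B.emeasure_space_1 s1 s2 by simp
    next
      assume "X \<in> hyp1 \<Theta> ` nonmax \<Theta>"
      then obtain t where t: "t \<in> nonmax \<Theta>" "X = hyp1 \<Theta> t" by auto
      have "X \<in> sets Q1" "X \<in> sets Q2" using t S1 S2 by (auto intro: sigma_sets.Basic)
      then show ?thesis using eq t by (simp add: A.emeasure_eq_measure B.emeasure_eq_measure)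
    qed
  qed (use S1 S2 sig A.emeasure_space_1 s1 in auto)
qed

lemma cof_up:
  assumes I: "is_interval \<Theta>" and ne: "\<Theta> \<noteq> {}" and nm: "\<not> has_max \<Theta>"
  shows "\<exists>u. incseq u \<and> (\<forall>n. u n \<in> \<Theta>) \<and> (\<forall>t\<in>\<Theta>. \<exists>n. t \<le> u n)"
proof -
  obtain c where c: "c \<in> \<Theta>" using ne by auto
  have iv: "\<And>a b x. a \<in> \<Theta> \<Longrightarrow> b \<in> \<Theta> \<Longrightarrow> a \<le> x \<Longrightarrow> x \<le> b \<Longrightarrow> x \<in> \<Theta>"
    using I unfolding is_interval_1 by blast
  show ?thesis
  proof (cases "bdd_above \<Theta>")
    case True
    define b where "b = Sup \<Theta>"
    have ub: "t \<le> b" if "t \<in> \<Theta>" for t using cSup_upper[OF that True] b_def by simp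
    have bn: "b \<notin> \<Theta>" using nm ub unfolding has_max_def by blast
    have cb: "c < b" using ub[OF c] bn c by (cases "c = b") auto
    define u where "u n = b - (b - c) / (real n + 1)" for n
    have inc: "incseq u" unfolding incseq_def u_def
    proof (intro allI impI)
      fix m n :: nat assume "m \<le> n"
      then have "(b - c) / (real n + 1) \<le> (b - c) / (real m + 1)"
        using cb by (intro divide_left_mono) auto
      then show "b - (b - c) / (real m + 1) \<le> b - (b - c) / (real n + 1)" by simp
    qed
    have uin: "u n \<in> \<Theta>" for n
    proof -
      have "0 < (b - c) / (real n + 1)" using cb by simp
      then have "u n < b" by (simp add: u_def)
      then obtain t where t: "t \<in> \<Theta>" "u n < t" using less_cSup_iff[OF ne True] b_def by auto
      have "(b - c) / (real n + 1) \<le> (b - c) / 1" using cb by (intro divide_left_mono) auto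
      then have "c \<le> u n" by (simp add: u_def)
      then show ?thesis using iv[OF c t(1)] t by simp
    qed
    have cof: "\<exists>n. t \<le> u n" if t: "t \<in> \<Theta>" for t
    proof -
      have tb: "t < b" using ub[OF t] bn t by (cases "t = b") auto
      obtain n :: nat where n: "(b - c) / (b - t) < real n" using reals_Archimedean2 by blast
      then have "b - c < real n * (b - t)" using tb by (simp add: divide_less_eq)
      also have "\<dots> \<le> (real n + 1) * (b - t)" using tb by (intro mult_right_mono) auto
      finally have "(b - c) / (real n + 1) < b - t" by (simp add: divide_less_eq mult.commute)
      then show ?thesis by (intro exI[of _ n]) (simp add: u_def)
    qed
    show ?thesis using inc uin cof by blast
  next
    case False
    define u where "u n = c + real n" for n
    have inc: "incseq u" unfolding incseq_def u_def by auto
    have uin: "u n \<in> \<Theta>" for n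
    proof -
      obtain t where t: "t \<in> \<Theta>" "u n < t" using False unfolding bdd_above_def by (meson not_le)
      then show ?thesis using iv[OF c t(1)] by (simp add: u_def)
    qed
    have cof: "\<exists>n. t \<le> u n" for t
    proof -
      obtain n :: nat where "t - c < real n" using reals_Archimedean2 by blast
      then show ?thesis by (intro exI[of _ n]) (simp add: u_def)
    qed
    show ?thesis using inc uin cof by blast
  qed
qed

lemma cof_down:
  assumes I: "is_interval \<Theta>" and ne: "\<Theta> \<noteq> {}" and nm: "\<not> has_min \<Theta>"
  shows "\<exists>u. decseq u \<and> (\<forall>n. u n \<in> \<Theta>) \<and> (\<forall>t\<in>\<Theta>. \<exists>n. u n \<le> t)"
proof -
  obtain c where c: "c \<in> \<Theta>" using ne by auto
  have iv: "\<And>a b x. a \<in> \<Theta> \<Longrightarrow> b \<in> \<Theta> \<Longrightarrow> a \<le> x \<Longrightarrow> x \<le> b \<Longrightarrow> x \<in> \<Theta>"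
    using I unfolding is_interval_1 by blast
  show ?thesis
  proof (cases "bdd_below \<Theta>")
    case True
    define b where "b = Inf \<Theta>"
    have ub: "b \<le> t" if "t \<in> \<Theta>" for t using cInf_lower[OF that True] b_def by simp
    have bn: "b \<notin> \<Theta>" using nm ub unfolding has_min_def by blast
    have cb: "b < c" using ub[OF c] bn c by (cases "c = b") auto
    define u where "u n = b + (c - b) / (real n + 1)" for n
    have inc: "decseq u" unfolding decseq_def u_def
    proof (intro allI impI)
      fix m n :: nat assume "m \<le> n"
      then have "(c - b) / (real n + 1) \<le> (c - b) / (real m + 1)"
        using cb by (intro divide_left_mono) auto
      then show "b + (c - b) / (real n + 1) \<le> b + (c - b) / (real m + 1)" by simp
    qed
    have uin: "u n \<in> \<Theta>" for n
    proof -
      have "0 < (c - b) / (real n + 1)" using cb by simp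
      then have "b < u n" by (simp add: u_def)
      then obtain t where t: "t \<in> \<Theta>" "t < u n" using cInf_less_iff[OF ne True] b_def by auto
      have "(c - b) / (real n + 1) \<le> (c - b) / 1" using cb by (intro divide_left_mono) auto
      then have "u n \<le> c" by (simp add: u_def)
      then show ?thesis using iv[OF t(1) c] t by simp
    qed
    have cof: "\<exists>n. u n \<le> t" if t: "t \<in> \<Theta>" for t
    proof -
      have tb: "b < t" using ub[OF t] bn t by (cases "t = b") auto
      obtain n :: nat where n: "(c - b) / (t - b) < real n" using reals_Archimedean2 by blast
      then have "c - b < real n * (t - b)" using tb by (simp add: divide_less_eq)
      also have "\<dots> \<le> (real n + 1) * (t - b)" using tb by (intro mult_right_mono) auto
      finally have "(c - b) / (real n + 1) < t - b" by (simp add: divide_less_eq mult.commute)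
      then show ?thesis by (intro exI[of _ n]) (simp add: u_def)
    qed
    show ?thesis using inc uin cof by blast
  next
    case False
    define u where "u n = c - real n" for n
    have inc: "decseq u" unfolding decseq_def u_def by auto
    have uin: "u n \<in> \<Theta>" for n
    proof -
      obtain t where t: "t \<in> \<Theta>" "t < u n" using False unfolding bdd_below_def by (meson not_le)
      then show ?thesis using iv[OF t(1) c] by (simp add: u_def)
    qed
    have cof: "\<exists>n. u n \<le> t" for t
    proof -
      obtain n :: nat where "c - t < real n" using reals_Archimedean2 by blast
      then show ?thesis by (intro exI[of _ n]) (simp add: u_def)
    qed
    show ?thesis using inc uin cof by blast
  qed
qed

lemma ev_sup:
  assumes ne: "\<Theta> \<noteq> {}" and nm: "\<not> has_max \<Theta>" and t0: "t0 \<in> \<Theta>"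
  shows "eventually (\<lambda>\<theta>. \<theta> \<in> \<Theta> \<and> t0 \<le> \<theta>) (to_sup \<Theta>)"
proof (cases "bdd_above \<Theta>")
  case True
  define b where "b = Sup \<Theta>"
  have ub: "t \<le> b" if "t \<in> \<Theta>" for t using cSup_upper[OF that True] b_def by simp
  have bn: "b \<notin> \<Theta>" using nm ub unfolding has_max_def by blast
  have tb: "t0 < b" using ub[OF t0] bn t0 by (cases "t0 = b") auto
  have "eventually (\<lambda>\<theta>. \<theta> \<in> \<Theta> \<and> t0 \<le> \<theta>) (at b within \<Theta>)"
    unfolding eventually_at
    by (rule exI[of _ "b - t0"]) (use tb ub in \<open>auto simp: dist_real_def\<close>)
  then show ?thesis using True by (simp add: to_sup_def b_def)
next
  case False
  have "eventually (\<lambda>\<theta>. \<theta> \<in> \<Theta> \<longrightarrow> \<theta> \<in> \<Theta> \<and> t0 \<le> \<theta>) at_top"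
    using eventually_ge_at_top[of t0] by eventually_elim auto
  then show ?thesis using False by (simp add: to_sup_def eventually_inf_principal)
qed

lemma ev_inf:
  assumes ne: "\<Theta> \<noteq> {}" and nm: "\<not> has_min \<Theta>" and t0: "t0 \<in> \<Theta>"
  shows "eventually (\<lambda>\<theta>. \<theta> \<in> \<Theta> \<and> \<theta> \<le> t0) (to_inf \<Theta>)"
proof (cases "bdd_below \<Theta>")
  case True
  define b where "b = Inf \<Theta>"
  have ub: "b \<le> t" if "t \<in> \<Theta>" for t using cInf_lower[OF that True] b_def by simp
  have bn: "b \<notin> \<Theta>" using nm ub unfolding has_min_def by blast
  have tb: "b < t0" using ub[OF t0] bn t0 by (cases "t0 = b") auto
  have "eventually (\<lambda>\<theta>. \<theta> \<in> \<Theta> \<and> \<theta> \<le> t0) (at b within \<Theta>)"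
    unfolding eventually_at
    by (rule exI[of _ "t0 - b"]) (use tb ub in \<open>auto simp: dist_real_def\<close>)
  then show ?thesis using True by (simp add: to_inf_def b_def)
next
  case False
  have "eventually (\<lambda>\<theta>. \<theta> \<in> \<Theta> \<longrightarrow> \<theta> \<in> \<Theta> \<and> \<theta> \<le> t0) at_bot"
    using eventually_le_at_bot[of t0] by eventually_elim auto
  then show ?thesis using False by (simp add: to_inf_def eventually_inf_principal)
qed

lemma hyp1_sets: "sets Q = sigma_sets \<Theta> (hyp1 \<Theta> ` nonmax \<Theta>) \<Longrightarrow> t \<in> nonmax \<Theta> \<Longrightarrow> hyp1 \<Theta> t \<in> sets Q"
  by (auto intro: sigma_sets.Basic)

lemma lim_top:
  assumes I: "is_interval \<Theta>" and ne: "\<Theta> \<noteq> {}" and nm: "\<not> has_max \<Theta>"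
    and P: "prob_space Q" and sp: "space Q = \<Theta>" and S: "sets Q = sigma_sets \<Theta> (hyp1 \<Theta> ` nonmax \<Theta>)"
  shows "((\<lambda>\<theta>. measure Q (hyp1 \<Theta> \<theta>)) \<longlongrightarrow> 1) (to_sup \<Theta>)"
proof -
  interpret prob_space Q by fact
  obtain u where u: "incseq u" "\<And>n. u n \<in> \<Theta>" "\<And>t. t \<in> \<Theta> \<Longrightarrow> \<exists>n. t \<le> u n"
    using cof_up[OF I ne nm] by blast
  have nmx: "nonmax \<Theta> = \<Theta>" using nonmax_eq[OF nm] .
  have hs: "hyp1 \<Theta> t \<in> sets Q" if "t \<in> \<Theta>" for t using hyp1_sets[OF S] that nmx by simp
  have un: "(\<Union>n. hyp1 \<Theta> (u n)) = \<Theta>"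
    using u(3) hyp1_sub by (auto simp: hyp1_def)
  have "(\<lambda>n. measure Q (hyp1 \<Theta> (u n))) \<longlonglongrightarrow> measure Q (\<Union>n. hyp1 \<Theta> (u n))"
  proof (rule finite_Lim_measure_incseq)
    show "range (\<lambda>n. hyp1 \<Theta> (u n)) \<subseteq> sets Q" using u(2) hs by auto
    show "incseq (\<lambda>n. hyp1 \<Theta> (u n))" using u(1) unfolding incseq_def by (auto intro!: hyp1_mono)
  qed
  then have lim: "(\<lambda>n. measure Q (hyp1 \<Theta> (u n))) \<longlonglongrightarrow> 1"
    using un prob_space sp by simp
  show ?thesis
  proof (rule order_tendstoI)
    fix a :: real assume "a < 1"
    then obtain n where n: "a < measure Q (hyp1 \<Theta> (u n))"
      using order_tendstoD(1)[OF lim] by (auto simp: eventually_sequentially)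
    show "eventually (\<lambda>\<theta>. a < measure Q (hyp1 \<Theta> \<theta>)) (to_sup \<Theta>)"
      using ev_sup[OF ne nm u(2)[of n]]
    proof eventually_elim
      case (elim \<theta>)
      then have "measure Q (hyp1 \<Theta> (u n)) \<le> measure Q (hyp1 \<Theta> \<theta>)"
        by (intro finite_measure_mono hyp1_mono hs) auto
      then show ?case using n by simp
    qed
  next
    fix a :: real assume "1 < a"
    then show "eventually (\<lambda>\<theta>. measure Q (hyp1 \<Theta> \<theta>) < a) (to_sup \<Theta>)"
      using prob_le_1 by (intro always_eventually allI) (metis le_less_trans)
  qed
qed

lemma lim_bot:
  assumes I: "is_interval \<Theta>" and ne: "\<Theta> \<noteq> {}" and nm: "\<not> has_min \<Theta>"
    and P: "prob_space Q" and sp: "space Q = \<Theta>" and S: "sets Q = sigma_sets \<Theta> (hyp1 \<Theta> ` nonmax \<Theta>)"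
  shows "((\<lambda>\<theta>. measure Q (hyp1 \<Theta> \<theta>)) \<longlongrightarrow> 0) (to_inf \<Theta>)"
proof -
  interpret prob_space Q by fact
  obtain u where u: "decseq u" "\<And>n. u n \<in> \<Theta>" "\<And>t. t \<in> \<Theta> \<Longrightarrow> \<exists>n. u n \<le> t"
    using cof_down[OF I ne nm] by blast
  have lower: "\<exists>s\<in>\<Theta>. s < t" if "t \<in> \<Theta>" for t
    using nm that unfolding has_min_def by (meson not_le)
  have iv: "\<And>a b x. a \<in> \<Theta> \<Longrightarrow> b \<in> \<Theta> \<Longrightarrow> a \<le> x \<Longrightarrow> x \<le> b \<Longrightarrow> x \<in> \<Theta>"
    using I unfolding is_interval_1 by blast
  obtain c where c: "c \<in> \<Theta>" using ne by auto
  obtain c' where c': "c' \<in> \<Theta>" "c' < c" using lower[OF c] by blast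
  define v where "v n = min (u n) c'" for n
  have vin: "v n \<in> \<Theta>" for n using u(2)[of n] c' by (simp add: v_def min_def)
  have vnm: "t \<in> nonmax \<Theta>" if "t \<in> \<Theta>" "t \<le> v n" for t n
    using that c' c by (auto simp: nonmax_def v_def intro!: bexI[of _ c])
  have hs: "hyp1 \<Theta> t \<in> sets Q" if "t \<in> nonmax \<Theta>" for t using hyp1_sets[OF S] that by simp
  have dec: "decseq v" using u(1) unfolding decseq_def v_def by (metis min.mono order_refl)
  have int: "(\<Inter>n. hyp1 \<Theta> (v n)) = {}"
  proof (rule ccontr)
    assume "(\<Inter>n. hyp1 \<Theta> (v n)) \<noteq> {}"
    then obtain t where t: "t \<in> \<Theta>" "\<And>n. t \<le> v n" by (auto simp: hyp1_def)
    obtain s where s: "s \<in> \<Theta>" "s < t" using lower[OF t(1)] by blast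
    obtain n where "u n \<le> s" using u(3)[OF s(1)] by blast
    then have "v n < t" using s by (simp add: v_def)
    then show False using t(2)[of n] by simp
  qed
  have "(\<lambda>n. measure Q (hyp1 \<Theta> (v n))) \<longlonglongrightarrow> measure Q (\<Inter>n. hyp1 \<Theta> (v n))"
      proof (rule finite_Lim_measure_decseq)
    show "range (\<lambda>n. hyp1 \<Theta> (v n)) \<subseteq> sets Q" using vin vnm hs by auto
    show "decseq (\<lambda>n. hyp1 \<Theta> (v n))" using dec unfolding decseq_def by (auto intro!: hyp1_mono)
  qed
  then have lim: "(\<lambda>n. measure Q (hyp1 \<Theta> (v n))) \<longlonglongrightarrow> 0"
    using int by simp
  show ?thesis
  proof (rule order_tendstoI)
    fix a :: real assume "0 < a"
    then obtain n where n: "measure Q (hyp1 \<Theta> (v n)) < a"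
      using order_tendstoD(2)[OF lim] by (auto simp: eventually_sequentially)
    show "eventually (\<lambda>\<theta>. measure Q (hyp1 \<Theta> \<theta>) < a) (to_inf \<Theta>)"
      using ev_inf[OF ne nm vin[of n]]
    proof eventually_elim
      case (elim \<theta>)
      then have "measure Q (hyp1 \<Theta> \<theta>) \<le> measure Q (hyp1 \<Theta> (v n))"
        using vin vnm by (intro finite_measure_mono hyp1_mono hs) auto
      then show ?case using n by simp
    qed
  next
    fix a :: real assume "a < 0"
    then show "eventually (\<lambda>\<theta>. a < measure Q (hyp1 \<Theta> \<theta>)) (to_inf \<Theta>)"
      by (intro always_eventually allI) (metis measure_nonneg less_le_trans)
  qed
qed



lemma at_right_le_within:
  fixes a c :: real
  assumes "a < c" and "\<And>y. a < y \<Longrightarrow> y < c \<Longrightarrow> y \<in> \<Theta>"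
  shows "at_right a \<le> at a within \<Theta>"
  unfolding le_filter_def
proof (intro allI impI)
  fix P assume "eventually P (at a within \<Theta>)"
  then obtain d where d: "d > 0" "\<And>x. x \<in> \<Theta> \<Longrightarrow> x \<noteq> a \<Longrightarrow> dist x a < d \<Longrightarrow> P x"
    unfolding eventually_at by blast
  show "eventually P (at_right a)"
    unfolding eventually_at_right_field
    by (rule exI[of _ "min (a + d) c"]) (use assms d in \<open>auto simp: dist_real_def\<close>)
qed

locale ex_setting =
  fixes \<Theta> :: "real set" and G :: "real \<Rightarrow> real"
  assumes I: "is_interval \<Theta>" and ne: "\<Theta> \<noteq> {}"
    and Gm: "\<And>s t. s \<in> \<Theta> \<Longrightarrow> t \<in> \<Theta> \<Longrightarrow> s \<le> t \<Longrightarrow> G s \<le> G t"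
    and Gr: "\<And>t. t \<in> \<Theta> \<Longrightarrow> 0 \<le> G t \<and> G t \<le> 1"
    and Gc: "\<And>t. t \<in> \<Theta> \<Longrightarrow> continuous (at t within \<Theta>) G"
    and top: "\<not> has_max \<Theta> \<Longrightarrow> (G \<longlongrightarrow> 1) (to_sup \<Theta>)"
    and bot: "\<not> has_min \<Theta> \<Longrightarrow> (G \<longlongrightarrow> 0) (to_inf \<Theta>)"
begin

definition UB :: "real \<Rightarrow> bool" where "UB t \<longleftrightarrow> (\<forall>s\<in>\<Theta>. s \<le> t)"
definition H :: "real \<Rightarrow> real" where
  "H t = (if t \<in> nonmax \<Theta> then G t else if UB t then 1 else 0)"

lemma iv: "a \<in> \<Theta> \<Longrightarrow> b \<in> \<Theta> \<Longrightarrow> a \<le> x \<Longrightarrow> x \<le> b \<Longrightarrow> x \<in> \<Theta>"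
  using I unfolding is_interval_1 by blast

lemma f1: assumes "t \<notin> nonmax \<Theta>" "\<not> UB t" shows "t \<notin> \<Theta>" "\<And>s. s \<in> \<Theta> \<Longrightarrow> t < s"
proof -
  obtain s where s: "s \<in> \<Theta>" "t < s" using assms(2) by (auto simp: UB_def not_le)
  show tn: "t \<notin> \<Theta>" using assms(1) s by (auto simp: nonmax_def)
  fix s' assume s': "s' \<in> \<Theta>"
  show "t < s'"
  proof (rule ccontr)
    assume "\<not> t < s'"
    then have "t \<in> \<Theta>" using iv[OF s' s(1), of t] s by simp
    then show False using tn by simp
  qed
qed

lemma f2: "UB t \<Longrightarrow> t \<notin> nonmax \<Theta>"
  by (auto simp: UB_def nonmax_def not_le)

lemma f3: assumes "t \<in> nonmax \<Theta>" "t \<le> y" "y \<notin> nonmax \<Theta>" shows "UB y"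
proof (rule ccontr)
  assume "\<not> UB y"
  from f1(2)[OF assms(3) this, of t] assms show False by (auto simp: nonmax_def)
qed

lemma H_range: "0 \<le> H t \<and> H t \<le> 1"
  using Gr by (auto simp: H_def nonmax_def)

lemma H_mono: assumes "s \<le> t" shows "H s \<le> H t"
proof (cases "s \<in> nonmax \<Theta>")
  case s: True
  show ?thesis
  proof (cases "t \<in> nonmax \<Theta>")
    case True then show ?thesis using s assms Gm by (auto simp: H_def nonmax_def)
  next
    case False then have "UB t" using f3[OF s assms] by simp
    then show ?thesis using s False Gr by (auto simp: H_def nonmax_def)
  qed
next
  case s: False
  show ?thesis
  proof (cases "t \<in> nonmax \<Theta>")
    case True
    then obtain x where "x \<in> \<Theta>" "t < x" by (auto simp: nonmax_def)
    then have "\<not> UB s" using assms by (auto simp: UB_def not_le intro!: bexI[of _ x])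
    then show ?thesis using s True Gr by (auto simp: H_def nonmax_def)
  next
    case False
    have "UB s \<Longrightarrow> UB t" using assms by (auto simp: UB_def)
    then show ?thesis using s False by (auto simp: H_def)
  qed
qed

lemma H_rc: "continuous (at_right a) H"
  unfolding continuous_within
proof -
  show "(H \<longlongrightarrow> H a) (at_right a)"
  proof (cases "a \<in> nonmax \<Theta>")
    case True
    then obtain c where c: "c \<in> \<Theta>" "a < c" and a: "a \<in> \<Theta>" by (auto simp: nonmax_def)
    have inT: "y \<in> \<Theta>" if "a < y" "y < c" for y using iv[OF a c(1)] that by simp
    have le: "at_right a \<le> at a within \<Theta>" by (rule at_right_le_within[OF c(2) inT])
    have "(G \<longlongrightarrow> G a) (at a within \<Theta>)" using Gc[OF a] by (simp add: continuous_within)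
    then have gl: "(G \<longlongrightarrow> G a) (at_right a)" using le by (rule tendsto_mono[rotated])
    have ev: "eventually (\<lambda>y. G y = H y) (at_right a)"
      unfolding eventually_at_right_field
      by (rule exI[of _ c]) (use c inT in \<open>auto simp: H_def nonmax_def\<close>)
    have Ha: "H a = G a" using True by (simp add: H_def)
    show ?thesis unfolding Ha by (rule tendsto_cong[OF ev, THEN iffD1]) (rule gl)
  next
    case nm: False
    show ?thesis
    proof (cases "UB a")
      case True
      have ev: "eventually (\<lambda>y. 1 = H y) (at_right a)"
        unfolding eventually_at_right_field
      proof (rule exI[of _ "a + 1"], safe)
        fix y assume "a < y"
        then have "UB y" using True by (auto simp: UB_def)
        then show "1 = H y" using f2 by (simp add: H_def)
      qed simp
      have Ha: "H a = 1" using True nm by (simp add: H_def)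
      show ?thesis unfolding Ha by (rule tendsto_cong[OF ev, THEN iffD1]) simp
    next
      case nub: False
      have Ha: "H a = 0" using nm nub by (simp add: H_def)
      have aT: "a \<notin> \<Theta>" and low: "\<And>s. s \<in> \<Theta> \<Longrightarrow> a < s" using f1[OF nm nub] by auto
      obtain c where c: "c \<in> \<Theta>" using ne by auto
      have bb: "bdd_below \<Theta>" using low by (auto simp: bdd_below_def intro!: exI[of _ a] less_imp_le)
      have aI: "a \<le> Inf \<Theta>" using low ne by (intro cInf_greatest) (auto intro: less_imp_le)
      show ?thesis
      proof (cases "a < Inf \<Theta>")
        case True
        have ev: "eventually (\<lambda>y. 0 = H y) (at_right a)"
          unfolding eventually_at_right_field
        proof (rule exI[of _ "Inf \<Theta>"], safe)
          fix y assume y: "a < y" "y < Inf \<Theta>"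
          have yn: "y \<notin> \<Theta>" using y cInf_lower[OF _ bb] by force
          have "y < c" using y cInf_lower[OF c bb] by simp
          then have "\<not> UB y" using c by (auto simp: UB_def not_le)
          then show "0 = H y" using yn by (simp add: H_def nonmax_def)
        qed (use True in simp)
        show ?thesis unfolding Ha by (rule tendsto_cong[OF ev, THEN iffD1]) simp
      next
        case False
        then have aeq: "a = Inf \<Theta>" using aI by simp
        have ac: "a < c" using low[OF c] .
        have inT: "y \<in> \<Theta>" if ya: "a < y" and yc: "y < c" for y
        proof -
          obtain s where "s \<in> \<Theta>" "s < y" using ya cInf_less_iff[OF ne bb] aeq by auto
          then show ?thesis using iv[of s c y] c yc by simp
        qed
        have nmin: "\<not> has_min \<Theta>"
          unfolding has_min_def
        proof
          assume "\<exists>m\<in>\<Theta>. \<forall>t\<in>\<Theta>. m \<le> t"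
          then obtain m where m: "m \<in> \<Theta>" "\<forall>t\<in>\<Theta>. m \<le> t" by blast
          have "m \<le> Inf \<Theta>" using m ne by (intro cInf_greatest) auto
          then show False using aeq aT m(1) low[OF m(1)] by simp
        qed
        have "(G \<longlongrightarrow> 0) (at a within \<Theta>)" using bot[OF nmin] bb aeq by (simp add: to_inf_def)
        then have gl: "(G \<longlongrightarrow> 0) (at_right a)"
          using at_right_le_within[OF ac inT] by (rule tendsto_mono[rotated])
        have ev: "eventually (\<lambda>y. G y = H y) (at_right a)"
          unfolding eventually_at_right_field
          by (rule exI[of _ c]) (use ac c inT in \<open>auto simp: H_def nonmax_def\<close>)
        show ?thesis unfolding Ha by (rule tendsto_cong[OF ev, THEN iffD1]) (rule gl)
      qed
    qed
  qed
qed

lemma H_bot: "(H \<longlongrightarrow> 0) at_bot"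
proof -
  obtain c where c: "c \<in> \<Theta>" using ne by auto
  show ?thesis
  proof (cases "bdd_below \<Theta>")
    case True
    have ev: "eventually (\<lambda>y. 0 = H y) at_bot"
      using eventually_gt_at_bot[of "Inf \<Theta>"]
    proof eventually_elim
      case (elim y)
      have yn: "y \<notin> \<Theta>" using elim cInf_lower[OF _ True] by force
      have "y < c" using elim cInf_lower[OF c True] by simp
      then have "\<not> UB y" using c by (auto simp: UB_def not_le)
      then show "0 = H y" using yn by (simp add: H_def nonmax_def)
    qed
    show ?thesis by (rule tendsto_cong[OF ev, THEN iffD1]) simp
  next
    case False
    have below: "\<exists>s\<in>\<Theta>. s < y" for y using False unfolding bdd_below_def by (meson not_le)
    have nmin: "\<not> has_min \<Theta>" using below unfolding has_min_def by (meson not_le)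
    have evT: "eventually (\<lambda>y. y < c \<and> y \<in> \<Theta>) at_bot"
      using eventually_gt_at_bot[of c]
    proof eventually_elim
      case (elim y)
      obtain s where "s \<in> \<Theta>" "s < y" using below by blast
      then show ?case using iv[of s c y] c elim by simp
    qed
    have le: "at_bot \<le> inf at_bot (principal \<Theta>)"
      using evT by (auto simp: le_principal elim: eventually_mono)
    have "(G \<longlongrightarrow> 0) (inf at_bot (principal \<Theta>))" using bot[OF nmin] False
      by (simp add: to_inf_def)
    then have gl: "(G \<longlongrightarrow> 0) at_bot" by (rule tendsto_mono[OF le])
    have ev: "eventually (\<lambda>y. G y = H y) at_bot"
      using evT by eventually_elim (use c in \<open>auto simp: H_def nonmax_def\<close>)
    show ?thesis by (rule tendsto_cong[OF ev, THEN iffD1]) (rule gl)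
  qed
qed

lemma H_top: "(H \<longlongrightarrow> 1) at_top"
proof -
  obtain c where c: "c \<in> \<Theta>" using ne by auto
  show ?thesis
  proof (cases "bdd_above \<Theta>")
    case True
    have ev: "eventually (\<lambda>y. 1 = H y) at_top"
      using eventually_gt_at_top[of "Sup \<Theta>"]
    proof eventually_elim
      case (elim y)
      have "UB y" using elim cSup_upper[OF _ True] by (force simp: UB_def)
      then show "1 = H y" using f2 by (simp add: H_def)
    qed
    show ?thesis by (rule tendsto_cong[OF ev, THEN iffD1]) simp
  next
    case False
    have above: "\<exists>s\<in>\<Theta>. y < s" for y using False unfolding bdd_above_def by (meson not_le)
    have nmax: "\<not> has_max \<Theta>" using above unfolding has_max_def by (meson not_le)
    have evT: "eventually (\<lambda>y. y \<in> nonmax \<Theta>) at_top"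
      using eventually_gt_at_top[of c]
    proof eventually_elim
      case (elim y)
      obtain s where "s \<in> \<Theta>" "y < s" using above by blast
      then show ?case using iv[OF c, of s y] elim by (auto simp: nonmax_def)
    qed
    have le: "at_top \<le> inf at_top (principal \<Theta>)"
      using evT by (auto simp: le_principal nonmax_def elim: eventually_mono)
    have "(G \<longlongrightarrow> 1) (inf at_top (principal \<Theta>))" using top[OF nmax] False
      by (simp add: to_sup_def)
    then have gl: "(G \<longlongrightarrow> 1) at_top" by (rule tendsto_mono[OF le])
    have ev: "eventually (\<lambda>y. G y = H y) at_top"
      using evT by eventually_elim (auto simp: H_def)
    show ?thesis by (rule tendsto_cong[OF ev, THEN iffD1]) (rule gl)
  qed
qed

definition M where "M = interval_measure H"

lemma M_real: "real_distribution M"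
  unfolding M_def by (rule real_distribution_interval_measure[OF H_mono H_rc H_bot H_top])

lemma M_prob: "prob_space M" using M_real by (simp add: real_distribution_def)
lemma M_sets[simp]: "sets M = sets borel" by (simp add: M_def)
lemma M_space[simp]: "space M = UNIV" by (simp add: M_def)

lemma M_Iic: "measure M {..x} = H x"
  unfolding M_def by (rule measure_interval_measure_Iic[OF H_mono H_rc H_bot])

lemma M_emeasure: "emeasure M A = ennreal (measure M A)"
proof -
  interpret prob_space M by (rule M_prob)
  show ?thesis by (simp add: emeasure_eq_measure)
qed

lemma null_iff: "A \<in> sets borel \<Longrightarrow> A \<in> null_sets M \<longleftrightarrow> measure M A = 0"
  by (simp add: null_sets_def M_emeasure)

lemma L_null: "{y. \<forall>s\<in>\<Theta>. y < s} \<in> null_sets M"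
proof -
  let ?L = "{y. \<forall>s\<in>\<Theta>. y < s}"
  have H0: "H y = 0" if "y \<in> ?L" for y
  proof -
    obtain c where c: "c \<in> \<Theta>" using ne by auto
    have "y \<notin> \<Theta>" using that by auto
    moreover have "\<not> UB y" using that c by (auto simp: UB_def not_le)
    ultimately show ?thesis by (simp add: H_def nonmax_def)
  qed
  show ?thesis
  proof (cases "bdd_below \<Theta>")
    case False
    have e: "?L = {}" using False unfolding bdd_below_def by (auto simp: not_le) (meson less_imp_le not_le)
    show ?thesis unfolding e by simp
  next
    case bb: True
    define a where "a = Inf \<Theta>"
    have low: "a \<le> s" if "s \<in> \<Theta>" for s using cInf_lower[OF that bb] a_def by simp
    show ?thesis
    proof (cases "a \<in> \<Theta>")
      case True
      have Leq: "?L = (\<Union>n. {..a - inverse (real (Suc n))})"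
      proof (intro equalityI subsetI)
        fix y assume y: "y \<in> ?L"
        then have "y < a" using True by auto
        then obtain n where n: "n > 0" "inverse (real n) < a - y"
          using ex_inverse_of_nat_less[of "a - y"] by auto
        have le: "inverse (real (Suc n)) \<le> inverse (real n)" using n by (intro le_imp_inverse_le) auto
        have "y \<le> a - inverse (real (Suc n))" using n(2) le by linarith
        then show "y \<in> (\<Union>n. {..a - inverse (real (Suc n))})" by blast
      next
        fix y assume "y \<in> (\<Union>n. {..a - inverse (real (Suc n))})"
        then obtain n where n: "y \<le> a - inverse (real (Suc n))" by auto
        have "0 < inverse (real (Suc n))" by simp
        then have "y < s" if "s \<in> \<Theta>" for s using low[OF that] n by linarith
        then show "y \<in> ?L" by auto
      qed
      have mem: "a - inverse (real (Suc n)) \<in> ?L" for n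
      proof -
        have p: "0 < inverse (real (Suc n))" by simp
        have "a - inverse (real (Suc n)) < s" if "s \<in> \<Theta>" for s using low[OF that] p by linarith
        then show ?thesis by auto
      qed
      have "(\<Union>n. {..a - inverse (real (Suc n))}) \<in> null_sets M"
      proof (rule null_sets_UN)
        fix n
        have "H (a - inverse (real (Suc n))) = 0" by (rule H0[OF mem])
        then show "{..a - inverse (real (Suc n))} \<in> null_sets M" by (subst null_iff) (simp_all add: M_Iic)
      qed
      then show ?thesis using Leq by simp
    next
      case False
      have Leq: "?L = {..a}"
      proof (intro equalityI subsetI)
        fix y assume "y \<in> ?L"
        then have "y \<le> a" unfolding a_def using ne by (intro cInf_greatest) (auto intro: less_imp_le)
        then show "y \<in> {..a}" by simp
      next
        fix y assume "y \<in> {..a}"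
        then have ya: "y \<le> a" by simp
        have "y < s" if "s \<in> \<Theta>" for s using low[of s] False ya that by (cases "s = a") auto
        then show "y \<in> ?L" by auto
      qed
      have "a \<in> ?L" using Leq by simp
      then show ?thesis using Leq by (simp add: null_iff M_Iic H0)
    qed
  qed
qed

lemma U_null: "{y. \<forall>s\<in>\<Theta>. s < y} \<in> null_sets M"
proof -
  interpret prob_space M by (rule M_prob)
  let ?U = "{y. \<forall>s\<in>\<Theta>. s < y}"
  show ?thesis
  proof (cases "bdd_above \<Theta>")
    case False
    have e: "?U = {}" using False unfolding bdd_above_def by (auto simp: not_le) (meson less_imp_le not_le)
    show ?thesis unfolding e by simp
  next
    case bb: True
    define b where "b = Sup \<Theta>"
    have up: "s \<le> b" if "s \<in> \<Theta>" for s using cSup_upper[OF that bb] b_def by simp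
    have compl: "measure M (UNIV - A) = 1 - measure M A" if "A \<in> sets borel" for A
      using prob_compl[of A] that by simp
    show ?thesis
    proof (cases "b \<in> \<Theta>")
      case True
      have Ueq: "?U = UNIV - {..b}"
      proof -
        have "s < x" if "b < x" "s \<in> \<Theta>" for x s using up[of s] that by linarith
        then show ?thesis using True by (auto simp: not_le)
      qed
      have "UB b" using up by (simp add: UB_def)
      then have "H b = 1" using f2 by (simp add: H_def)
      then show ?thesis using Ueq by (simp add: null_iff compl M_Iic)
    next
      case False
      have Ueq: "?U = UNIV - {..<b}"
      proof (intro equalityI subsetI)
        fix y assume y: "y \<in> ?U"
        have "\<not> y < b"
        proof
          assume "y < b"
          then show False using y less_cSup_iff[OF ne bb, of y] b_def by auto
        qed
        then show "y \<in> UNIV - {..<b}" by simp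
      next
        fix y assume "y \<in> UNIV - {..<b}"
        then have yb: "b \<le> y" by simp
        have "s < y" if "s \<in> \<Theta>" for s using up[of s] False that yb by (cases "s = b") auto
        then show "y \<in> ?U" by auto
      qed
      have nmax: "\<not> has_max \<Theta>" using False up unfolding has_max_def
        by (metis antisym cSup_least ne b_def)
      have tl: "(G \<longlongrightarrow> 1) (at b within \<Theta>)" using top[OF nmax] bb by (simp add: to_sup_def b_def)
      have "b \<in> closure \<Theta>" using closure_contains_Sup[OF ne bb] b_def by simp
      then have "b islimpt \<Theta>" using False by (simp add: closure_def)
      then have nt: "\<not> trivial_limit (at b within \<Theta>)" by (simp add: trivial_limit_within)
      have "1 \<le> measure M {..<b}"
      proof (rule tendsto_le[OF nt tendsto_const tl])
        show "eventually (\<lambda>t. G t \<le> measure M {..<b}) (at b within \<Theta>)"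
          unfolding eventually_at_filter
        proof (intro always_eventually allI impI)
          fix t assume "t \<noteq> b" "t \<in> \<Theta>"
          then have tb: "t < b" using up[of t] by simp
          then have "t \<in> nonmax \<Theta>" using \<open>t \<in> \<Theta>\<close> less_cSup_iff[OF ne bb, of t] b_def
            by (auto simp: nonmax_def)
          then have "G t = measure M {..t}" by (simp add: M_Iic H_def)
          also have "\<dots> \<le> measure M {..<b}" using tb by (intro finite_measure_mono) auto
          finally show "G t \<le> measure M {..<b}" .
        qed
      qed
      moreover have "measure M {..<b} \<le> 1" by simp
      ultimately have "measure M {..<b} = 1" by simp
      then show ?thesis using Ueq by (simp add: null_iff compl)
    qed
  qed
qed

lemma Theta_borel: "\<Theta> \<in> sets borel"
  by (rule real_interval_borel_measurable[OF I])

lemma compl_null: "UNIV - \<Theta> \<in> null_sets M"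
proof -
  have "UNIV - \<Theta> \<subseteq> {y. \<forall>s\<in>\<Theta>. y < s} \<union> {y. \<forall>s\<in>\<Theta>. s < y}"
  proof
    fix y assume y: "y \<in> UNIV - \<Theta>"
    show "y \<in> {y. \<forall>s\<in>\<Theta>. y < s} \<union> {y. \<forall>s\<in>\<Theta>. s < y}"
    proof (cases "\<forall>s\<in>\<Theta>. s < y")
      case False
      then obtain s where s: "s \<in> \<Theta>" "y \<le> s" by (auto simp: not_less)
      have "y < s'" if "s' \<in> \<Theta>" for s'
        using iv[of s' s y] y s that by (cases "y < s'") auto
      then show ?thesis by auto
    qed auto
  qed
  note sub = this
  have un: "{y. \<forall>s\<in>\<Theta>. y < s} \<union> {y. \<forall>s\<in>\<Theta>. s < y} \<in> null_sets M"
    using L_null U_null by (rule null_sets.Un)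
  show ?thesis
    by (rule null_sets_subset[OF un _ sub]) (rule sets.Diff, auto simp: Theta_borel)
qed

lemma exists:
  "\<exists>Q. prob_space Q \<and> space Q = \<Theta> \<and> sets Q = sigma_sets \<Theta> (hyp1 \<Theta> ` nonmax \<Theta>) \<and>
      (\<forall>\<theta>\<in>nonmax \<Theta>. measure Q (hyp1 \<Theta> \<theta>) = G \<theta>)"
proof -
  let ?E = "hyp1 \<Theta> ` nonmax \<Theta>"
  define Q where "Q = measure_of \<Theta> ?E (emeasure M)"
  have E: "?E \<subseteq> Pow \<Theta>" using hyp1_sub by auto
  have sQ: "sets Q = sigma_sets \<Theta> ?E" unfolding Q_def using E by simp
  have spQ: "space Q = \<Theta>" unfolding Q_def using E by simp
  have sub: "sigma_sets \<Theta> ?E \<subseteq> sets borel"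
  proof
    fix A assume "A \<in> sigma_sets \<Theta> ?E"
    then show "A \<in> sets borel"
    proof (induct rule: sigma_sets.induct)
      case (Basic a)
      then obtain t where "a = {..t} \<inter> \<Theta>" by (auto simp: hyp1_def)
      then show ?case using Theta_borel by auto
    next
      case (Compl a)
      then show ?case using Theta_borel by auto
    qed auto
  qed
  have pos: "positive (sets Q) (emeasure M)" by (simp add: positive_def)
  have ca: "countably_additive (sets Q) (emeasure M)"
    unfolding countably_additive_def
  proof (intro allI impI)
    fix A :: "nat \<Rightarrow> real set"
    assume A: "range A \<subseteq> sets Q" "disjoint_family A"
    show "(\<Sum>i. emeasure M (A i)) = emeasure M (\<Union>i. A i)"
      by (rule suminf_emeasure) (use A sub sQ in auto)
  qed
  have eQ: "emeasure Q A = emeasure M A" if "A \<in> sets Q" for A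
    by (rule emeasure_measure_of[OF Q_def E pos ca that])
  have mQ: "measure Q A = measure M A" if "A \<in> sets Q" for A
    using eQ[OF that] by (simp add: measure_def)
  have MT: "measure M \<Theta> = 1"
  proof -
    interpret prob_space M by (rule M_prob)
    have "measure M (UNIV - (UNIV - \<Theta>)) = measure M UNIV"
      by (rule measure_Diff_null_set[OF _ compl_null]) simp
    then show ?thesis using prob_space by (simp add: double_diff)
  qed
  have TQ: "\<Theta> \<in> sets Q" using sQ by (simp add: sigma_sets_top)
  have PQ: "prob_space Q"
    by (rule prob_spaceI) (simp add: spQ eQ[OF TQ] M_emeasure MT)
  have hQ: "measure Q (hyp1 \<Theta> t) = G t" if t: "t \<in> nonmax \<Theta>" for t
  proof -
    have hs: "hyp1 \<Theta> t \<in> sets Q" using sQ t by (auto intro: sigma_sets.Basic)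
    have "measure M ({..t} - (UNIV - \<Theta>)) = measure M {..t}"
      by (rule measure_Diff_null_set[OF _ compl_null]) simp
    moreover have "{..t} - (UNIV - \<Theta>) = hyp1 \<Theta> t" by (auto simp: hyp1_def)
    ultimately have "measure M (hyp1 \<Theta> t) = H t" by (simp add: M_Iic)
    then show ?thesis using mQ[OF hs] t by (simp add: H_def)
  qed
  show ?thesis using PQ spQ sQ hQ by blast
qed

end


locale setting =
  fixes I \<Theta> :: "real set" and p :: "real \<Rightarrow> real \<Rightarrow> real"
  assumes I_int: "is_interval I"
    and Theta_int: "is_interval \<Theta>" and Theta_ne: "\<Theta> \<noteq> {}"
    and pos: "\<And>\<theta> x. \<theta> \<in> \<Theta> \<Longrightarrow> x \<in> I \<Longrightarrow> p \<theta> x > 0"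
    and meas: "\<And>\<theta>. \<theta> \<in> \<Theta> \<Longrightarrow> set_borel_measurable lebesgue I (p \<theta>)"
    and dens: "\<And>\<theta>. \<theta> \<in> \<Theta> \<Longrightarrow> (\<integral>\<^sup>+ x\<in>I. ennreal (p \<theta> x) \<partial>lebesgue) = 1"
    and cont: "\<And>x. x \<in> I \<Longrightarrow> continuous_on \<Theta> (\<lambda>\<theta>. p \<theta> x)"
    and mlr: "\<And>\<theta>1 \<theta>2. \<theta>1 \<in> \<Theta> \<Longrightarrow> \<theta>2 \<in> \<Theta> \<Longrightarrow> \<theta>1 < \<theta>2 \<Longrightarrow>
                strict_mono_on I (\<lambda>x. p \<theta>2 x / p \<theta>1 x)"
begin

definition g :: "real \<Rightarrow> real \<Rightarrow> real" where "g \<theta> y = indicator I y * p \<theta> y"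

lemma g_nonneg: "\<theta> \<in> \<Theta> \<Longrightarrow> 0 \<le> g \<theta> y"
  using pos[of \<theta> y] by (auto simp: g_def split: split_indicator)

lemma g_meas[measurable]: "\<theta> \<in> \<Theta> \<Longrightarrow> g \<theta> \<in> borel_measurable lebesgue"
  using meas[of \<theta>] unfolding set_borel_measurable_def g_def by simp

lemma g_nn: "\<theta> \<in> \<Theta> \<Longrightarrow> (\<integral>\<^sup>+ y. ennreal (g \<theta> y) \<partial>lebesgue) = 1"
proof -
  assume t: "\<theta> \<in> \<Theta>"
  have "(\<integral>\<^sup>+ y. ennreal (g \<theta> y) \<partial>lebesgue) = (\<integral>\<^sup>+ x\<in>I. ennreal (p \<theta> x) \<partial>lebesgue)"
    by (rule nn_integral_cong) (auto simp: g_def split: split_indicator)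
  then show ?thesis using dens[OF t] by simp
qed

lemma g_int: "\<theta> \<in> \<Theta> \<Longrightarrow> integrable lebesgue (g \<theta>)"
  by (rule integrableI_nonneg) (auto simp: g_nonneg g_nn)

lemma g_integral: "\<theta> \<in> \<Theta> \<Longrightarrow> integral\<^sup>L lebesgue (g \<theta>) = 1"
proof -
  assume t: "\<theta> \<in> \<Theta>"
  have "ennreal (integral\<^sup>L lebesgue (g \<theta>)) = (\<integral>\<^sup>+ y. ennreal (g \<theta> y) \<partial>lebesgue)"
    by (rule nn_integral_eq_integral[symmetric]) (auto simp: g_int[OF t] g_nonneg[OF t])
  then show ?thesis using g_nn[OF t] by simp
qed

lemma distF_eq: "distF I p \<theta> x = integral\<^sup>L lebesgue (\<lambda>y. indicator {..x} y * g \<theta> y)"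
  unfolding distF_def set_lebesgue_integral_def g_def
  by (rule Bochner_Integration.integral_cong) (auto split: split_indicator)

lemma ind_int: "\<theta> \<in> \<Theta> \<Longrightarrow> A \<in> sets lebesgue \<Longrightarrow> integrable lebesgue (\<lambda>y. indicator A y * g \<theta> y)"
  apply (rule Bochner_Integration.integrable_bound[OF g_int])
    apply assumption
   apply measurable
  apply (auto simp: g_nonneg split: split_indicator)
  done

lemma distF_compl: "\<theta> \<in> \<Theta> \<Longrightarrow> integral\<^sup>L lebesgue (\<lambda>y. indicator {x<..} y * g \<theta> y) = 1 - distF I p \<theta> x"
proof -
  assume t: "\<theta> \<in> \<Theta>"
  have "integral\<^sup>L lebesgue (\<lambda>y. indicator {..x} y * g \<theta> y + indicator {x<..} y * g \<theta> y)
     = distF I p \<theta> x + integral\<^sup>L lebesgue (\<lambda>y. indicator {x<..} y * g \<theta> y)"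
    unfolding distF_eq by (rule Bochner_Integration.integral_add) (auto intro!: ind_int t)
  moreover have "(\<lambda>y. indicator {..x} y * g \<theta> y + indicator {x<..} y * g \<theta> y) = g \<theta>"
    by (auto split: split_indicator)
  ultimately show ?thesis using g_integral[OF t] by simp
qed

lemma distF_nonneg: "\<theta> \<in> \<Theta> \<Longrightarrow> 0 \<le> distF I p \<theta> x"
  unfolding distF_eq by (rule Bochner_Integration.integral_nonneg) (auto simp: g_nonneg)

lemma distF_le1: "\<theta> \<in> \<Theta> \<Longrightarrow> distF I p \<theta> x \<le> 1"
proof -
  assume t: "\<theta> \<in> \<Theta>"
  have "0 \<le> integral\<^sup>L lebesgue (\<lambda>y. indicator {x<..} y * g \<theta> y)"
    by (rule Bochner_Integration.integral_nonneg) (auto simp: g_nonneg t)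
  then show ?thesis using distF_compl[OF t] by simp
qed

lemma distF_mono:
  assumes t1: "\<theta>1 \<in> \<Theta>" and t2: "\<theta>2 \<in> \<Theta>" and lt: "\<theta>1 < \<theta>2" and x: "x \<in> I"
  shows "distF I p \<theta>2 x \<le> distF I p \<theta>1 x"
proof -
  define r where "r = p \<theta>2 x / p \<theta>1 x"
  have rpos: "r > 0" using pos[OF t1 x] pos[OF t2 x] by (simp add: r_def)
  have sm: "strict_mono_on I (\<lambda>x. p \<theta>2 x / p \<theta>1 x)" using mlr[OF t1 t2 lt] .
  have below: "p \<theta>2 y \<le> r * p \<theta>1 y" if "y \<in> I" "y \<le> x" for y
  proof -
    have "p \<theta>2 y / p \<theta>1 y \<le> r"
    proof (cases "y = x")
      case False
      then have "y < x" using that by simp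
      then show ?thesis using strict_mono_onD[OF sm that(1) x] by (simp add: r_def)
    qed (simp add: r_def)
    then show ?thesis using pos[OF t1 that(1)] by (simp add: divide_le_eq)
  qed
  have above: "r * p \<theta>1 y \<le> p \<theta>2 y" if "y \<in> I" "x < y" for y
  proof -
    have "r \<le> p \<theta>2 y / p \<theta>1 y"
      using strict_mono_onD[OF sm x that(1) that(2)] by (simp add: r_def)
    then show ?thesis using pos[OF t1 that(1)] by (simp add: le_divide_eq)
  qed
  define a1 where "a1 = distF I p \<theta>1 x"
  define a2 where "a2 = distF I p \<theta>2 x"
  define b1 where "b1 = integral\<^sup>L lebesgue (\<lambda>y. indicator {x<..} y * g \<theta>1 y)"
  define b2 where "b2 = integral\<^sup>L lebesgue (\<lambda>y. indicator {x<..} y * g \<theta>2 y)"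
  have i1: "integrable lebesgue (\<lambda>y. indicator {..x} y * g \<theta>1 y)" by (rule ind_int[OF t1]) simp
  have i2: "integrable lebesgue (\<lambda>y. indicator {..x} y * g \<theta>2 y)" by (rule ind_int[OF t2]) simp
  have j1: "integrable lebesgue (\<lambda>y. indicator {x<..} y * g \<theta>1 y)" by (rule ind_int[OF t1]) simp
  have j2: "integrable lebesgue (\<lambda>y. indicator {x<..} y * g \<theta>2 y)" by (rule ind_int[OF t2]) simp
  have "a2 \<le> integral\<^sup>L lebesgue (\<lambda>y. r * (indicator {..x} y * g \<theta>1 y))"
    unfolding a2_def distF_eq
    by (rule integral_mono[OF i2 integrable_mult_right[OF i1]]) (auto intro!: below simp: g_def split: split_indicator)
  then have h1: "a2 \<le> r * a1" unfolding a1_def distF_eq by simp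
  have "integral\<^sup>L lebesgue (\<lambda>y. r * (indicator {x<..} y * g \<theta>1 y)) \<le> b2"
    unfolding b2_def
    by (rule integral_mono[OF integrable_mult_right[OF j1] j2]) (auto intro!: above simp: g_def split: split_indicator)
  then have h2: "r * b1 \<le> b2" unfolding b1_def by simp
  have s1: "b1 = 1 - a1" unfolding a1_def b1_def using distF_compl[OF t1] .
  have s2: "b2 = 1 - a2" unfolding a2_def b2_def using distF_compl[OF t2] .
  have a1: "0 \<le> a1" "a1 \<le> 1" unfolding a1_def using distF_nonneg[OF t1] distF_le1[OF t1] by auto
  have "a2 * b1 \<le> r * a1 * b1" using h1 s1 a1 by (intro mult_right_mono) auto
  also have "\<dots> = a1 * (r * b1)" by simp
  also have "\<dots> \<le> a1 * b2" using h2 a1 by (intro mult_left_mono) auto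
  finally have "a2 * (1 - a1) \<le> a1 * (1 - a2)" using s1 s2 by simp
  then have "a2 \<le> a1" by (simp add: algebra_simps)
  then show ?thesis by (simp add: a1_def a2_def)
qed

lemma distF_cont:
  assumes t: "\<theta> \<in> \<Theta>"
  shows "continuous (at \<theta> within \<Theta>) (\<lambda>t. distF I p t x)"
  unfolding continuous_within_sequentially
proof (intro allI impI, elim conjE)
  fix s :: "nat \<Rightarrow> real"
  assume sT: "\<forall>n. s n \<in> \<Theta>" and lim: "s \<longlonglongrightarrow> \<theta>"
  have conv: "(\<lambda>n. g (s n) y) \<longlonglongrightarrow> g \<theta> y" for y
  proof (cases "y \<in> I")
    case True
    have "(\<lambda>n. p (s n) y) \<longlonglongrightarrow> p \<theta> y"
      by (rule continuous_on_tendsto_compose[OF cont[OF True] lim t]) (use sT in auto)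
    then show ?thesis using True by (simp add: g_def)
  qed (simp add: g_def)
  have sch: "(\<lambda>n. \<integral>\<^sup>+ y. norm (g (s n) y - g \<theta> y) \<partial>lebesgue) \<longlonglongrightarrow> 0"
  proof (rule Scheffe_lemma2)
    show "g (s n) \<in> borel_measurable lebesgue" for n using sT by simp
    show "integrable lebesgue (g \<theta>)" using g_int[OF t] .
    show "AE y in lebesgue. (\<lambda>n. g (s n) y) \<longlonglongrightarrow> g \<theta> y" using conv by simp
    show "(\<integral>\<^sup>+ y. norm (g (s n) y) \<partial>lebesgue) \<le> (\<integral>\<^sup>+ y. norm (g \<theta> y) \<partial>lebesgue)" for n
      using g_nn[OF t] g_nn[of "s n"] sT g_nonneg[OF t] g_nonneg[of "s n"] by simp
  qed
  define d where "d n = distF I p (s n) x - distF I p \<theta> x" for n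
  have deq: "d n = integral\<^sup>L lebesgue (\<lambda>y. indicator {..x} y * g (s n) y - indicator {..x} y * g \<theta> y)" for n
    unfolding d_def distF_eq
    by (rule Bochner_Integration.integral_diff[symmetric]) (auto intro!: ind_int t sT[rule_format])
  have bnd: "ennreal (norm (d n)) \<le> (\<integral>\<^sup>+ y. norm (g (s n) y - g \<theta> y) \<partial>lebesgue)" for n
  proof -
    have "ennreal (norm (d n)) \<le> (\<integral>\<^sup>+ y. norm (indicator {..x} y * g (s n) y - indicator {..x} y * g \<theta> y) \<partial>lebesgue)"
      unfolding deq by (rule integral_norm_bound_ennreal) (auto intro!: ind_int t sT[rule_format])
    also have "\<dots> \<le> (\<integral>\<^sup>+ y. norm (g (s n) y - g \<theta> y) \<partial>lebesgue)"
      by (rule nn_integral_mono) (auto split: split_indicator)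
    finally show ?thesis .
  qed
  have "(\<lambda>n. ennreal (norm (d n))) \<longlonglongrightarrow> 0"
    using bnd by (intro tendsto_sandwich[OF _ _ tendsto_const sch] always_eventually allI) auto
  then have "(\<lambda>n. enn2real (ennreal (norm (d n)))) \<longlonglongrightarrow> 0"
    using tendsto_enn2real[of _ 0] by (metis ennreal_0 order_refl)
  then have "(\<lambda>n. norm (d n)) \<longlonglongrightarrow> 0" by simp
  then have "d \<longlonglongrightarrow> 0" by (simp add: tendsto_rabs_zero_iff)
  then show "((\<lambda>t. distF I p t x) \<circ> s) \<longlonglongrightarrow> distF I p \<theta> x"
    unfolding d_def o_def by (simp add: LIM_zero_iff)
qed


lemma main:
  "votes_compatible I \<Theta> (distF I p) \<longleftrightarrow>
    (AE x in lebesgue. x \<in> I \<longrightarrow>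
       (\<not> has_max \<Theta> \<longrightarrow> ((\<lambda>\<theta>. distF I p \<theta> x) \<longlongrightarrow> 0) (to_sup \<Theta>)) \<and>
       (\<not> has_min \<Theta> \<longrightarrow> ((\<lambda>\<theta>. distF I p \<theta> x) \<longlongrightarrow> 1) (to_inf \<Theta>)))"
  unfolding votes_compatible_def
proof
  assume L: "AE x in lebesgue. x \<in> I \<longrightarrow>
        (\<exists>!Q :: real measure. prob_space Q \<and> space Q = \<Theta> \<and>
            sets Q = sigma_sets \<Theta> (hyp1 \<Theta> ` nonmax \<Theta>) \<and>
            (\<forall>\<theta>\<in>nonmax \<Theta>. measure Q (hyp1 \<Theta> \<theta>) = 1 - distF I p \<theta> x))"
  show "AE x in lebesgue. x \<in> I \<longrightarrow>
       (\<not> has_max \<Theta> \<longrightarrow> ((\<lambda>\<theta>. distF I p \<theta> x) \<longlongrightarrow> 0) (to_sup \<Theta>)) \<and>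
       (\<not> has_min \<Theta> \<longrightarrow> ((\<lambda>\<theta>. distF I p \<theta> x) \<longlongrightarrow> 1) (to_inf \<Theta>))"
    using L
  proof (rule eventually_mono, intro impI)
    fix x assume "x \<in> I \<longrightarrow> (\<exists>!Q :: real measure. prob_space Q \<and> space Q = \<Theta> \<and>
            sets Q = sigma_sets \<Theta> (hyp1 \<Theta> ` nonmax \<Theta>) \<and>
            (\<forall>\<theta>\<in>nonmax \<Theta>. measure Q (hyp1 \<Theta> \<theta>) = 1 - distF I p \<theta> x))" and x: "x \<in> I"
    then obtain Q :: "real measure" where P: "prob_space Q" and sp: "space Q = \<Theta>"
      and S: "sets Q = sigma_sets \<Theta> (hyp1 \<Theta> ` nonmax \<Theta>)"
      and eq: "\<And>\<theta>. \<theta> \<in> nonmax \<Theta> \<Longrightarrow> measure Q (hyp1 \<Theta> \<theta>) = 1 - distF I p \<theta> x" by blast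
    obtain c where c: "c \<in> \<Theta>" using Theta_ne by auto
    show "(\<not> has_max \<Theta> \<longrightarrow> ((\<lambda>\<theta>. distF I p \<theta> x) \<longlongrightarrow> 0) (to_sup \<Theta>)) \<and>
       (\<not> has_min \<Theta> \<longrightarrow> ((\<lambda>\<theta>. distF I p \<theta> x) \<longlongrightarrow> 1) (to_inf \<Theta>))"
    proof (intro conjI impI)
      assume nm: "\<not> has_max \<Theta>"
      have l: "((\<lambda>\<theta>. 1 - measure Q (hyp1 \<Theta> \<theta>)) \<longlongrightarrow> 1 - 1) (to_sup \<Theta>)"
        by (intro tendsto_diff tendsto_const lim_top[OF Theta_int Theta_ne nm P sp S])
      have ev: "eventually (\<lambda>\<theta>. 1 - measure Q (hyp1 \<Theta> \<theta>) = distF I p \<theta> x) (to_sup \<Theta>)"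
        using ev_sup[OF Theta_ne nm c] by eventually_elim (use eq nonmax_eq[OF nm] in auto)
      show "((\<lambda>\<theta>. distF I p \<theta> x) \<longlongrightarrow> 0) (to_sup \<Theta>)"
        using tendsto_cong[OF ev, THEN iffD1, OF l] by simp
    next
      assume nm: "\<not> has_min \<Theta>"
      obtain c' where c': "c' \<in> \<Theta>" "c' < c" using nm c unfolding has_min_def by (meson not_le)
      have l: "((\<lambda>\<theta>. 1 - measure Q (hyp1 \<Theta> \<theta>)) \<longlongrightarrow> 1 - 0) (to_inf \<Theta>)"
        by (intro tendsto_diff tendsto_const lim_bot[OF Theta_int Theta_ne nm P sp S])
      have ev: "eventually (\<lambda>\<theta>. 1 - measure Q (hyp1 \<Theta> \<theta>) = distF I p \<theta> x) (to_inf \<Theta>)"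
        using ev_inf[OF Theta_ne nm c'(1)]
      proof eventually_elim
        case (elim \<theta>)
        then have "\<theta> \<in> nonmax \<Theta>" using c c' by (auto simp: nonmax_def intro!: bexI[of _ c])
        then show ?case using eq by simp
      qed
      show "((\<lambda>\<theta>. distF I p \<theta> x) \<longlongrightarrow> 1) (to_inf \<Theta>)"
        using tendsto_cong[OF ev, THEN iffD1, OF l] by simp
    qed
  qed
next
  assume R: "AE x in lebesgue. x \<in> I \<longrightarrow>
       (\<not> has_max \<Theta> \<longrightarrow> ((\<lambda>\<theta>. distF I p \<theta> x) \<longlongrightarrow> 0) (to_sup \<Theta>)) \<and>
       (\<not> has_min \<Theta> \<longrightarrow> ((\<lambda>\<theta>. distF I p \<theta> x) \<longlongrightarrow> 1) (to_inf \<Theta>))"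
  show "AE x in lebesgue. x \<in> I \<longrightarrow>
        (\<exists>!Q :: real measure. prob_space Q \<and> space Q = \<Theta> \<and>
            sets Q = sigma_sets \<Theta> (hyp1 \<Theta> ` nonmax \<Theta>) \<and>
            (\<forall>\<theta>\<in>nonmax \<Theta>. measure Q (hyp1 \<Theta> \<theta>) = 1 - distF I p \<theta> x))"
    using R
  proof (rule eventually_mono, intro impI)
    fix x assume h: "x \<in> I \<longrightarrow>
       (\<not> has_max \<Theta> \<longrightarrow> ((\<lambda>\<theta>. distF I p \<theta> x) \<longlongrightarrow> 0) (to_sup \<Theta>)) \<and>
       (\<not> has_min \<Theta> \<longrightarrow> ((\<lambda>\<theta>. distF I p \<theta> x) \<longlongrightarrow> 1) (to_inf \<Theta>))" and x: "x \<in> I"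
    have es: "ex_setting \<Theta> (\<lambda>\<theta>. 1 - distF I p \<theta> x)"
    proof
      show "is_interval \<Theta>" by (rule Theta_int)
      show "\<Theta> \<noteq> {}" by (rule Theta_ne)
      fix s t assume st: "s \<in> \<Theta>" "t \<in> \<Theta>" "s \<le> t"
      show "1 - distF I p s x \<le> 1 - distF I p t x"
      proof (cases "s = t")
        case False
        then show ?thesis using distF_mono[OF st(1) st(2) _ x] st by simp
      qed simp
    next
      fix t assume t: "t \<in> \<Theta>"
      show "0 \<le> 1 - distF I p t x \<and> 1 - distF I p t x \<le> 1"
        using distF_nonneg[OF t] distF_le1[OF t] by simp
      show "continuous (at t within \<Theta>) (\<lambda>\<theta>. 1 - distF I p \<theta> x)"
        by (intro continuous_diff continuous_const distF_cont t)
    next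
      assume nm: "\<not> has_max \<Theta>"
      then have "((\<lambda>\<theta>. distF I p \<theta> x) \<longlongrightarrow> 0) (to_sup \<Theta>)" using h x by simp
      then have "((\<lambda>\<theta>. 1 - distF I p \<theta> x) \<longlongrightarrow> 1 - 0) (to_sup \<Theta>)"
        by (intro tendsto_diff tendsto_const)
      then show "((\<lambda>\<theta>. 1 - distF I p \<theta> x) \<longlongrightarrow> 1) (to_sup \<Theta>)" by simp
    next
      assume nm: "\<not> has_min \<Theta>"
      then have "((\<lambda>\<theta>. distF I p \<theta> x) \<longlongrightarrow> 1) (to_inf \<Theta>)" using h x by simp
      then have "((\<lambda>\<theta>. 1 - distF I p \<theta> x) \<longlongrightarrow> 1 - 1) (to_inf \<Theta>)"
        by (intro tendsto_diff tendsto_const)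
      then show "((\<lambda>\<theta>. 1 - distF I p \<theta> x) \<longlongrightarrow> 0) (to_inf \<Theta>)" by simp
    qed
    obtain Q :: "real measure" where Q: "prob_space Q" "space Q = \<Theta>"
      "sets Q = sigma_sets \<Theta> (hyp1 \<Theta> ` nonmax \<Theta>)"
      "\<forall>\<theta>\<in>nonmax \<Theta>. measure Q (hyp1 \<Theta> \<theta>) = 1 - distF I p \<theta> x"
      using ex_setting.exists[OF es] by blast
    show "\<exists>!Q :: real measure. prob_space Q \<and> space Q = \<Theta> \<and>
            sets Q = sigma_sets \<Theta> (hyp1 \<Theta> ` nonmax \<Theta>) \<and>
            (\<forall>\<theta>\<in>nonmax \<Theta>. measure Q (hyp1 \<Theta> \<theta>) = 1 - distF I p \<theta> x)"
    proof (rule ex1I[of _ Q])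
      show "prob_space Q \<and> space Q = \<Theta> \<and> sets Q = sigma_sets \<Theta> (hyp1 \<Theta> ` nonmax \<Theta>) \<and>
            (\<forall>\<theta>\<in>nonmax \<Theta>. measure Q (hyp1 \<Theta> \<theta>) = 1 - distF I p \<theta> x)" using Q by blast
      fix Q' :: "real measure"
      assume "prob_space Q' \<and> space Q' = \<Theta> \<and> sets Q' = sigma_sets \<Theta> (hyp1 \<Theta> ` nonmax \<Theta>) \<and>
            (\<forall>\<theta>\<in>nonmax \<Theta>. measure Q' (hyp1 \<Theta> \<theta>) = 1 - distF I p \<theta> x)"
      then show "Q' = Q" using Q by (intro uniq) auto
    qed
  qed
qed

end

theorem proposition4p2:

  fixes I \<Theta> :: "real set" and p :: "real \<Rightarrow> real \<Rightarrow> real"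
  assumes I_int: "is_interval I"
    and Theta_int: "is_interval \<Theta>" and Theta_ne: "\<Theta> \<noteq> {}"
    and pos: "\<And>\<theta> x. \<theta> \<in> \<Theta> \<Longrightarrow> x \<in> I \<Longrightarrow> p \<theta> x > 0"
    and meas: "\<And>\<theta>. \<theta> \<in> \<Theta> \<Longrightarrow> set_borel_measurable lebesgue I (p \<theta>)"
    and dens: "\<And>\<theta>. \<theta> \<in> \<Theta> \<Longrightarrow> (\<integral>\<^sup>+ x\<in>I. ennreal (p \<theta> x) \<partial>lebesgue) = 1"
    and cont: "\<And>x. x \<in> I \<Longrightarrow> continuous_on \<Theta> (\<lambda>\<theta>. p \<theta> x)"
    and mlr: "\<And>\<theta>1 \<theta>2. \<theta>1 \<in> \<Theta> \<Longrightarrow> \<theta>2 \<in> \<Theta> \<Longrightarrow> \<theta>1 < \<theta>2 \<Longrightarrow>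
                strict_mono_on I (\<lambda>x. p \<theta>2 x / p \<theta>1 x)"
  shows "votes_compatible I \<Theta> (distF I p) \<longleftrightarrow>
    (AE x in lebesgue. x \<in> I \<longrightarrow>
       (\<not> has_max \<Theta> \<longrightarrow> ((\<lambda>\<theta>. distF I p \<theta> x) \<longlongrightarrow> 0) (to_sup \<Theta>)) \<and>
       (\<not> has_min \<Theta> \<longrightarrow> ((\<lambda>\<theta>. distF I p \<theta> x) \<longlongrightarrow> 1) (to_inf \<Theta>)))"
proof -
  interpret setting I \<Theta> p
    by (unfold_locales) (use assms in auto)
  show ?thesis by (rule main)
qed

end
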